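(* Let $\mathcal I=(i_-,i_+)\subseteq\mathbb R$ and let $P,Q$ be smooth functions on $\mathcal I$ with $P\ge 0$. Assume $Q$ is strictly increasing on $\mathcal I$ with $Q'(x)>0$ for all $x\in\mathcal I$, and $$\lim_{x\to i_-}Q(x)<0,\qquad \lim_{x\to i_+}Q(x)>0 .$$ Let $f_\infty$ be a probability density on $\mathcal I$ satisfying $$\frac{d}{dx}\big(P(x)f_\infty(x)\big)+Q(x)f_\infty(x)=0,\qquad x\in\mathcal I,$$ and let $X$ be a random variable with density $f_\infty$. Define $w(x)=P(x)/Q'(x)$ for $x\in\mathcal I$. Then for every smooth function $\phi$ on $\mathcal I$ such that $\phi(X)$ has finite variance, $$\int_{\mathcal I}\phi^2 f_\infty\,dx-\Big(\int_{\mathcal I}\phi f_\infty\,dx\Big)^2\le \int_{\mathcal I} w(x)\,(\phi'(x))^2 f_\infty(x)\,dx,$$ i.e. $\mathrm{Var}[\phi(X)]\le E\{w(X)[\phi'(X)]^2\}$ (meaning: whenever the right-hand side is finite, the inequality holds).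
   Context: $\mathrm{Var}[\phi(X)]=E[\phi(X)^2]-(E[\phi(X)])^2$. The differential relation for $f_\infty$ expresses that $f_\infty$ is a stationary solution of the Fokker–Planck equation $\partial_t f=\partial_x^2(Pf)+\partial_x(Qf)$ on $\mathcal I$. *)

theory Defs
  imports "HOL-Analysis.Analysis"
begin

definition ointerval :: "ereal \<Rightarrow> ereal \<Rightarrow> real set" where
  "ointerval a b = {x. a < ereal x \<and> ereal x < b}"

definition left_end :: "ereal \<Rightarrow> real filter" where
  "left_end a = (if a = -\<infinity> then at_bot else at_right (real_of_ereal a))"

definition right_end :: "ereal \<Rightarrow> real filter" where
  "right_end b = (if b = \<infinity> then at_top else at_left (real_of_ereal b))"

definition smooth_on :: "real set \<Rightarrow> (real \<Rightarrow> real) \<Rightarrow> bool" where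
  "smooth_on S f \<longleftrightarrow> (\<forall>n. \<forall>x\<in>S. ((deriv ^^ n) f) differentiable (at x))"

end

theory Submission
  imports Defs
begin


lemma key_ineq:
  fixes p fx d q v w :: real
  assumes "d > 0" "p * fx \<ge> 0"
  shows "v\<^sup>2 * fx \<le> p / d * w\<^sup>2 * fx - (2 * v * w * (p * fx)/q - v\<^sup>2*fx - v\<^sup>2*(p*fx)*d/q\<^sup>2)"
proof (cases "q = 0")
  case True
  have "0 \<le> (p*fx) * w\<^sup>2" using assms(2) by simp
  then have "0 \<le> (p*fx) * w\<^sup>2 / d" using assms(1) by simp
  then show ?thesis using True by (simp add: mult_ac)
next
  case False
  have "0 \<le> (p*fx) * (w * q - v * d)\<^sup>2 / (d * q\<^sup>2)"
    using assms False by (intro divide_nonneg_pos mult_nonneg_nonneg[OF assms(2)]) auto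
  also have "(p*fx) * (w * q - v * d)\<^sup>2 / (d * q\<^sup>2) = p / d * w\<^sup>2 * fx - (2 * v * w * (p * fx)/q - v\<^sup>2*(p*fx)*d/q\<^sup>2)"
    using assms False by (simp add: field_simps power2_eq_square)
  finally show ?thesis by simp
qed

lemma set_nn_eq:
  fixes u :: "'a \<Rightarrow> real"
  assumes "set_integrable M A u" "A \<in> sets M" "\<And>x. x \<in> A \<Longrightarrow> 0 \<le> u x"
  shows "(\<integral>\<^sup>+x\<in>A. ennreal (u x) \<partial>M) = ennreal (LINT x:A|M. u x)"
proof -
  have AE: "AE x in M. 0 \<le> u x * indicator A x"
    using assms(3) by (auto simp: indicator_def)
  show ?thesis
    unfolding set_lebesgue_integral_def nn_integral_set_ennreal using assms AE
    by (subst nn_integral_eq_integral) (simp_all add: mult_ac set_integrable_def)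
qed

lemma left_end_in:
  assumes "im < ip"
  shows "eventually (\<lambda>x. x \<in> ointerval im ip) (left_end im)" "left_end im \<noteq> bot"
proof -
  obtain c where c: "im < ereal c" "ereal c < ip"
    using einterval_nonempty[OF assms] by (auto simp: einterval_def)
  show "eventually (\<lambda>x. x \<in> ointerval im ip) (left_end im)"
  proof (cases im)
    case (real r)
    then have "r < c" using c by simp
    have "eventually (\<lambda>x. x \<in> ointerval im ip) (at_right r)"
      by (rule eventually_at_rightI[OF _ \<open>r < c\<close>]) (use c real in \<open>auto simp: ointerval_def intro: order.strict_trans[of _ "ereal c"]\<close>)
    then show ?thesis using real by (simp add: left_end_def)
  next
    case PInf then show ?thesis using assms by simp
  next
    case MInf
    have "eventually (\<lambda>x. x \<in> ointerval im ip) at_bot"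
      unfolding eventually_at_bot_dense using c MInf
      by (intro exI[of _ c]) (auto simp: ointerval_def intro: order.strict_trans[of _ "ereal c"])
    then show ?thesis using MInf by (simp add: left_end_def)
  qed
  show "left_end im \<noteq> bot" by (simp add: left_end_def)
qed

lemma right_end_in:
  assumes "im < ip"
  shows "eventually (\<lambda>x. x \<in> ointerval im ip) (right_end ip)" "right_end ip \<noteq> bot"
proof -
  obtain c where c: "im < ereal c" "ereal c < ip"
    using einterval_nonempty[OF assms] by (auto simp: einterval_def)
  show "eventually (\<lambda>x. x \<in> ointerval im ip) (right_end ip)"
  proof (cases ip)
    case (real r)
    then have "c < r" using c by simp
    have "eventually (\<lambda>x. x \<in> ointerval im ip) (at_left r)"
      by (rule eventually_at_leftI[OF _ \<open>c < r\<close>]) (use c real in \<open>auto simp: ointerval_def intro: order.strict_trans[of _ "ereal c"]\<close>)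
    then show ?thesis using real by (simp add: right_end_def)
  next
    case MInf then show ?thesis using assms by simp
  next
    case PInf
    have "eventually (\<lambda>x. x \<in> ointerval im ip) at_top"
      unfolding eventually_at_top_dense using c PInf
      by (intro exI[of _ c]) (auto simp: ointerval_def intro: order.strict_trans[of _ "ereal c"])
    then show ?thesis using PInf by (simp add: right_end_def)
  qed
  show "right_end ip \<noteq> bot" by (simp add: right_end_def)
qed


lemma compact_step:
  fixes P Q f \<phi> :: "real \<Rightarrow> real" and a b z :: real
  assumes az: "a \<le> z" and zb: "z \<le> b"
    and dphi: "\<And>x. x \<in> {a..b} \<Longrightarrow> (\<phi> has_real_derivative deriv \<phi> x) (at x)"
    and cdphi: "\<And>x. x \<in> {a..b} \<Longrightarrow> isCont (deriv \<phi>) x"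
    and dQ: "\<And>x. x \<in> {a..b} \<Longrightarrow> (Q has_real_derivative deriv Q x) (at x)"
    and cdQ: "\<And>x. x \<in> {a..b} \<Longrightarrow> isCont (deriv Q) x"
    and cP: "\<And>x. x \<in> {a..b} \<Longrightarrow> isCont P x"
    and Qpos: "\<And>x. x \<in> {a..b} \<Longrightarrow> deriv Q x > 0"
    and Qz: "Q z = 0"
    and Qneq: "\<And>x. x \<in> {a..b} \<Longrightarrow> x \<noteq> z \<Longrightarrow> Q x \<noteq> 0"
    and Qa: "Q a \<le> 0" and Qb: "Q b \<ge> 0"
    and Pnn: "\<And>x. x \<in> {a..b} \<Longrightarrow> P x \<ge> 0"
    and fnn: "\<And>x. x \<in> {a..b} \<Longrightarrow> f x \<ge> 0"
    and dA: "\<And>x. x \<in> {a..b} \<Longrightarrow> ((\<lambda>y. P y * f y) has_real_derivative - (Q x * f x)) (at x)"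
    and fint: "set_integrable lborel {a..b} f"
    and G1int: "set_integrable lborel {a..b} (\<lambda>x. (\<phi> x - \<phi> z)\<^sup>2 * f x)"
  shows "set_integrable lborel {a..b} (\<lambda>x. P x / deriv Q x * (deriv \<phi> x)\<^sup>2 * f x)"
    "(LINT x:{a..b}|lborel. (\<phi> x - \<phi> z)\<^sup>2 * f x)
       \<le> (LINT x:{a..b}|lborel. P x / deriv Q x * (deriv \<phi> x)\<^sup>2 * f x)"
proof -
  define h where "h x = P x / deriv Q x * (deriv \<phi> x)\<^sup>2" for x
  have hc: "continuous_on {a..b} h"
  proof (intro continuous_at_imp_continuous_on ballI)
    fix x assume x: "x \<in> {a..b}"
    show "isCont h x" unfolding h_def
      using cP[OF x] cdQ[OF x] cdphi[OF x] Qpos[OF x]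
      by (intro continuous_intros) auto
  qed
  obtain C where C: "\<And>x. x \<in> {a..b} \<Longrightarrow> \<bar>h x\<bar> \<le> C"
  proof -
    have "compact (h ` {a..b})" by (rule compact_continuous_image[OF hc compact_Icc])
    then have "bounded (h ` {a..b})" by (rule compact_imp_bounded)
    then obtain C where "\<forall>y\<in>h ` {a..b}. norm y \<le> C" unfolding bounded_iff by blast
    then show ?thesis by (intro that[of C]) auto
  qed
  have fmeas: "(\<lambda>x. indicator {a..b} x *\<^sub>R f x) \<in> borel_measurable borel"
    using fint unfolding set_integrable_def by (simp add: borel_measurable_integrable)
  have hmeas: "(\<lambda>x. indicator {a..b} x *\<^sub>R h x) \<in> borel_measurable borel"
    by (rule borel_measurable_continuous_on_indicator[OF _ hc]) simp
  have G2meas: "set_borel_measurable lborel {a..b} (\<lambda>x. h x * f x)"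
  proof -
    have "(\<lambda>x. (indicator {a..b} x *\<^sub>R h x) * (indicator {a..b} x *\<^sub>R f x)) \<in> borel_measurable borel"
      using hmeas fmeas by measurable
    moreover have "(\<lambda>x. (indicator {a..b} x *\<^sub>R h x) * (indicator {a..b} x *\<^sub>R f x))
        = (\<lambda>x. indicator {a..b} x *\<^sub>R (h x * f x))"
      by (auto simp: indicator_def)
    ultimately show ?thesis unfolding set_borel_measurable_def by simp
  qed
  have G2int: "set_integrable lborel {a..b} (\<lambda>x. h x * f x)"
  proof (rule set_integrable_bound[OF _ G2meas])
    show "set_integrable lborel {a..b} (\<lambda>x. C * f x)" using fint by simp
    show "AE x in lborel. x \<in> {a..b} \<longrightarrow> norm (h x * f x) \<le> norm (C * f x)"
    proof (intro AE_I2 impI)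
      fix x assume x: "x \<in> {a..b}"
      have "norm (h x * f x) = \<bar>h x\<bar> * f x" using fnn[OF x] by (simp add: abs_mult)
      also have "\<dots> \<le> C * f x" using C[OF x] fnn[OF x] by (simp add: mult_right_mono)
      also have "\<dots> \<le> norm (C * f x)" by simp
      finally show "norm (h x * f x) \<le> norm (C * f x)" .
    qed
  qed
  then show "set_integrable lborel {a..b} (\<lambda>x. P x / deriv Q x * (deriv \<phi> x)\<^sup>2 * f x)"
    by (simp add: h_def)
  define \<psi> where "\<psi> x = \<phi> x - \<phi> z" for x
  define A where "A y = P y * f y" for y
  define K where "K x = (\<psi> x)\<^sup>2 * A x / Q x" for x
  define Kd where "Kd x = 2 * \<psi> x * deriv \<phi> x * (P x * f x) / Q x - (\<psi> x)\<^sup>2 * f x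
      - (\<psi> x)\<^sup>2 * (P x * f x) * deriv Q x / (Q x)\<^sup>2" for x
  have Aeq: "A = (\<lambda>y. P y * f y)" by (simp add: A_def fun_eq_iff)
  have zab: "z \<in> {a..b}" using az zb by simp
  have dpsi: "(\<psi> has_real_derivative deriv \<phi> x) (at x)" if x: "x \<in> {a..b}" for x
    unfolding \<psi>_def[abs_def] using DERIV_diff[OF dphi[OF x] DERIV_const[of "\<phi> z"]] by simp
  have dA': "(A has_real_derivative - (Q x * f x)) (at x)" if x: "x \<in> {a..b}" for x
    unfolding Aeq using dA[OF x] .
  have dK: "(K has_real_derivative Kd x) (at x)" if x: "x \<in> {a..b}" and xz: "x \<noteq> z" for x
  proof -
    have Qx: "Q x \<noteq> 0" using Qneq[OF x xz] .
    have d1: "((\<lambda>y. (\<psi> y)\<^sup>2) has_real_derivative 2 * \<psi> x * deriv \<phi> x) (at x)"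
      by (rule DERIV_cong[OF DERIV_power[OF dpsi[OF x], of 2]]) simp
    have d2: "((\<lambda>y. (\<psi> y)\<^sup>2 * A y) has_real_derivative
        2 * \<psi> x * deriv \<phi> x * A x + (\<psi> x)\<^sup>2 * (- (Q x * f x))) (at x)"
      by (rule DERIV_cong[OF DERIV_mult[OF d1 dA'[OF x]]]) simp
    note d3 = DERIV_divide[OF d2 dQ[OF x] Qx]
    show ?thesis unfolding K_def[abs_def]
      by (rule DERIV_cong[OF d3]) (use Qx in \<open>simp add: Kd_def A_def field_simps power2_eq_square\<close>)
  qed
  have cKz: "isCont K z"
  proof -
    have l1: "((\<lambda>y. (\<phi> y - \<phi> z) / (y - z)) \<longlongrightarrow> deriv \<phi> z) (at z)"
      using dphi[OF zab] by (simp add: has_field_derivative_iff)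
    have l2: "((\<lambda>y. (Q y - Q z) / (y - z)) \<longlongrightarrow> deriv Q z) (at z)"
      using dQ[OF zab] by (simp add: has_field_derivative_iff)
    have l3': "((\<lambda>y. ((\<phi> y - \<phi> z) / (y - z)) / ((Q y - Q z) / (y - z))) \<longlongrightarrow> deriv \<phi> z / deriv Q z) (at z)"
      by (rule tendsto_divide[OF l1 l2]) (use Qpos[OF zab] in simp)
    have ev: "eventually (\<lambda>y. ((\<phi> y - \<phi> z) / (y - z)) / ((Q y - Q z) / (y - z)) = \<psi> y / Q y) (at z)"
      unfolding eventually_at_filter by (auto simp: \<psi>_def Qz intro!: always_eventually)
    have l3: "((\<lambda>y. \<psi> y / Q y) \<longlongrightarrow> deriv \<phi> z / deriv Q z) (at z)"
      using tendsto_cong[OF ev] l3' by simp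
    have l4: "(\<psi> \<longlongrightarrow> 0) (at z)"
      using DERIV_isCont[OF dpsi[OF zab]] by (simp add: isCont_def \<psi>_def)
    have l5: "(A \<longlongrightarrow> A z) (at z)"
      using DERIV_isCont[OF dA'[OF zab]] by (simp add: isCont_def)
    have "((\<lambda>y. \<psi> y * A y * (\<psi> y / Q y)) \<longlongrightarrow> 0 * A z * (deriv \<phi> z / deriv Q z)) (at z)"
      by (intro tendsto_mult l3 l4 l5)
    moreover have "(\<lambda>y. \<psi> y * A y * (\<psi> y / Q y)) = K"
      by (auto simp: K_def fun_eq_iff power2_eq_square)
    moreover have "K z = 0" by (simp add: K_def \<psi>_def)
    ultimately show ?thesis by (simp add: isCont_def)
  qed
  have cK: "continuous_on {a..b} K"
  proof (intro continuous_at_imp_continuous_on ballI)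
    fix x assume x: "x \<in> {a..b}"
    show "isCont K x"
    proof (cases "x = z")
      case True then show ?thesis using cKz by simp
    next
      case False then show ?thesis using DERIV_isCont[OF dK[OF x False]] by simp
    qed
  qed
  have FTC: "(Kd has_integral (K b - K a)) {a..b}"
  proof (rule fundamental_theorem_of_calculus_interior_strong[of "{z}"])
    show "a \<le> b" using az zb by simp
    show "continuous_on {a..b} K" by (rule cK)
    fix x assume "x \<in> {a<..<b} - {z}"
    then show "(K has_vector_derivative Kd x) (at x)"
      using dK[of x] by (simp add: has_real_derivative_iff_has_vector_derivative)
  qed simp
  have I1: "((\<lambda>x. (\<phi> x - \<phi> z)\<^sup>2 * f x) has_integral (LINT x:{a..b}|lborel. (\<phi> x - \<phi> z)\<^sup>2 * f x)) {a..b}"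
    using set_borel_integral_eq_integral[OF G1int] by (simp add: integrable_integral)
  have I2: "((\<lambda>x. h x * f x) has_integral (LINT x:{a..b}|lborel. h x * f x)) {a..b}"
    using set_borel_integral_eq_integral[OF G2int] by (simp add: integrable_integral)
  note I3 = has_integral_diff[OF I2 FTC]
  have le: "(LINT x:{a..b}|lborel. (\<phi> x - \<phi> z)\<^sup>2 * f x)
      \<le> (LINT x:{a..b}|lborel. h x * f x) - (K b - K a)"
  proof (rule has_integral_le[OF I1 I3])
    fix x assume x: "x \<in> {a..b}"
    have "0 \<le> P x * f x" using Pnn[OF x] fnn[OF x] by simp
    from key_ineq[OF Qpos[OF x] this, of "\<psi> x" "deriv \<phi> x" "Q x"]
    show "(\<phi> x - \<phi> z)\<^sup>2 * f x \<le> h x * f x - Kd x"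
      by (simp add: h_def Kd_def \<psi>_def)
  qed
  have "K a \<le> 0"
    unfolding K_def using Pnn[of a] fnn[of a] az zb Qa
    by (intro divide_nonneg_nonpos mult_nonneg_nonneg) (auto simp: A_def)
  moreover have "K b \<ge> 0"
    unfolding K_def using Pnn[of b] fnn[of b] az zb Qb
    by (intro divide_nonneg_nonneg mult_nonneg_nonneg) (auto simp: A_def)
  ultimately show "(LINT x:{a..b}|lborel. (\<phi> x - \<phi> z)\<^sup>2 * f x)
       \<le> (LINT x:{a..b}|lborel. P x / deriv Q x * (deriv \<phi> x)\<^sup>2 * f x)"
    using le by (simp add: h_def)
qed

lemma abs_le_sq1: "\<bar>t::real\<bar> \<le> t\<^sup>2 + 1"
proof -
  have "0 \<le> (\<bar>t\<bar> - 1)\<^sup>2" by simp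
  hence "0 \<le> \<bar>t\<bar> * \<bar>t\<bar> - 2 * \<bar>t\<bar> + 1" by (simp add: power2_eq_square algebra_simps)
  moreover have "\<bar>t\<bar> * \<bar>t\<bar> = t\<^sup>2" by (simp add: power2_eq_square)
  ultimately show ?thesis by linarith
qed

lemma smooth_D:
  assumes "smooth_on S F" "x \<in> S"
  shows "(F has_real_derivative deriv F x) (at x)" "isCont (deriv F) x" "isCont F x"
proof -
  have "(deriv ^^ 0) F differentiable (at x)" "(deriv ^^ 1) F differentiable (at x)"
    using assms unfolding smooth_on_def by blast+
  then have d0: "F differentiable (at x)" and d1: "deriv F differentiable (at x)" by simp_all
  show "(F has_real_derivative deriv F x) (at x)"
    using d0 by (simp add: DERIV_deriv_iff_real_differentiable)
  show "isCont (deriv F) x"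
    using d1 by (simp add: DERIV_deriv_iff_real_differentiable[symmetric] DERIV_isCont)
  show "isCont F x"
    using d0 by (simp add: DERIV_deriv_iff_real_differentiable[symmetric] DERIV_isCont)
qed



theorem theorem2p1:
  fixes im ip :: ereal and P Q f \<phi> :: "real \<Rightarrow> real"
  assumes "im < ip"
    and "smooth_on (ointerval im ip) P" and "smooth_on (ointerval im ip) Q"
    and "\<forall>x\<in>ointerval im ip. P x \<ge> 0"
    and "strict_mono_on (ointerval im ip) Q"
    and "\<forall>x\<in>ointerval im ip. deriv Q x > 0"
    and "\<exists>L. L < 0 \<and> ((\<lambda>x. ereal (Q x)) \<longlongrightarrow> L) (left_end im)"
    and "\<exists>R. R > 0 \<and> ((\<lambda>x. ereal (Q x)) \<longlongrightarrow> R) (right_end ip)"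
    and "\<forall>x\<in>ointerval im ip. f x \<ge> 0"
    and "set_integrable lborel (ointerval im ip) f"
    and "(\<integral>x\<in>ointerval im ip. f x \<partial>lborel) = 1"
    and "\<forall>x\<in>ointerval im ip.
           ((\<lambda>y. P y * f y) has_real_derivative (- (Q x * f x))) (at x)"
    and "smooth_on (ointerval im ip) \<phi>"
    and "set_integrable lborel (ointerval im ip) (\<lambda>x. (\<phi> x)\<^sup>2 * f x)"
  shows "ennreal ((\<integral>x\<in>ointerval im ip. (\<phi> x)\<^sup>2 * f x \<partial>lborel)
                   - (\<integral>x\<in>ointerval im ip. \<phi> x * f x \<partial>lborel)\<^sup>2)
         \<le> (\<integral>\<^sup>+x\<in>ointerval im ip.
               ennreal ((P x / deriv Q x) * (deriv \<phi> x)\<^sup>2 * f x) \<partial>lborel)"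
  proof -
  let ?I = "ointerval im ip"
  have Ieq: "?I = einterval im ip" by (simp add: ointerval_def einterval_def)
  have openI: "open ?I" using Ieq by simp
  have measI: "?I \<in> sets lborel" using Ieq by simp
  have conv: "x \<in> ?I" if "a \<in> ?I" "b \<in> ?I" "a \<le> x" "x \<le> b" for a b x
  proof -
    have "ereal a \<le> ereal x" "ereal x \<le> ereal b" using that by simp_all
    then show ?thesis using that(1,2) unfolding ointerval_def
      using less_le_trans le_less_trans by blast
  qed
  note dphi = smooth_D(1)[OF assms(13)] and cdphi = smooth_D(2)[OF assms(13)]
    and cphi = smooth_D(3)[OF assms(13)]
  note dQ = smooth_D(1)[OF assms(3)] and cdQ = smooth_D(2)[OF assms(3)]
    and cQ = smooth_D(3)[OF assms(3)]
  note cP = smooth_D(3)[OF assms(2)]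
  have Qstrict: "Q a < Q b" if "a \<in> ?I" "b \<in> ?I" "a < b" for a b
    using assms(5) that by (simp add: strict_mono_on_def)
  have Qmono: "Q a \<le> Q b" if "a \<in> ?I" "b \<in> ?I" "a \<le> b" for a b
    using Qstrict[OF that(1,2)] that(3) by (cases "a = b") auto
  obtain z where zI: "z \<in> ?I" and Qz: "Q z = 0"
  proof -
    obtain L where L: "L < 0" "((\<lambda>x. ereal (Q x)) \<longlongrightarrow> L) (left_end im)" using assms(7) by blast
    have "eventually (\<lambda>x. ereal (Q x) < 0) (left_end im)" using order_tendstoD(2)[OF L(2) L(1)] .
    then have "eventually (\<lambda>x. x \<in> ?I \<and> Q x < 0) (left_end im)"
      using left_end_in(1)[OF assms(1)] by eventually_elim simp
    then obtain a where a: "a \<in> ?I" "Q a < 0" using eventually_happens'[OF left_end_in(2)[OF assms(1)]] by blast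
    obtain R where R: "R > 0" "((\<lambda>x. ereal (Q x)) \<longlongrightarrow> R) (right_end ip)" using assms(8) by blast
    have "eventually (\<lambda>x. 0 < ereal (Q x)) (right_end ip)" using order_tendstoD(1)[OF R(2) R(1)] .
    then have "eventually (\<lambda>x. x \<in> ?I \<and> 0 < Q x) (right_end ip)"
      using right_end_in(1)[OF assms(1)] by eventually_elim simp
    then obtain b where b: "b \<in> ?I" "0 < Q b" using eventually_happens'[OF right_end_in(2)[OF assms(1)]] by blast
    have ab: "a \<le> b"
    proof (rule ccontr)
      assume "\<not> a \<le> b"
      then have "Q b < Q a" using Qstrict[OF b(1) a(1)] by simp
      then show False using a b by simp
    qed
    have "continuous_on {a..b} Q"
      using conv[OF a(1) b(1)] cQ by (intro continuous_at_imp_continuous_on) auto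
    then obtain x where "a \<le> x" "x \<le> b" "Q x = 0" using IVT'[of Q a 0 b] a b ab by auto
    then show ?thesis using that conv[OF a(1) b(1)] by blast
  qed
  have Qneq: "Q x \<noteq> 0" if "x \<in> ?I" "x \<noteq> z" for x
  proof (cases "x < z")
    case True then show ?thesis using Qstrict[OF that(1) zI] Qz by simp
  next
    case False then have "z < x" using that(2) by simp
    then show ?thesis using Qstrict[OF zI that(1)] Qz by simp
  qed
  have fI: "set_integrable lborel ?I f" by (rule assms(10))
  have phi2I: "set_integrable lborel ?I (\<lambda>x. (\<phi> x)\<^sup>2 * f x)" by (rule assms(14))
  have fmeas: "(\<lambda>x. indicator ?I x *\<^sub>R f x) \<in> borel_measurable borel"
    using fI unfolding set_integrable_def by (simp add: borel_measurable_integrable)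
  have phimeas: "(\<lambda>x. indicator ?I x *\<^sub>R \<phi> x) \<in> borel_measurable borel"
    by (rule borel_measurable_continuous_on_indicator)
      (use measI cphi in \<open>auto intro!: continuous_at_imp_continuous_on\<close>)
  have phifI: "set_integrable lborel ?I (\<lambda>x. \<phi> x * f x)"
  proof (rule set_integrable_bound)
    show "set_integrable lborel ?I (\<lambda>x. (\<phi> x)\<^sup>2 * f x + f x)"
      using phi2I fI by (rule set_integral_add(1))
    have "(\<lambda>x. (indicator ?I x *\<^sub>R \<phi> x) * (indicator ?I x *\<^sub>R f x)) \<in> borel_measurable borel"
      using phimeas fmeas by measurable
    moreover have "(\<lambda>x. (indicator ?I x *\<^sub>R \<phi> x) * (indicator ?I x *\<^sub>R f x))
        = (\<lambda>x. indicator ?I x *\<^sub>R (\<phi> x * f x))"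
      by (auto simp: indicator_def fun_eq_iff)
    ultimately show "set_borel_measurable lborel ?I (\<lambda>x. \<phi> x * f x)"
      unfolding set_borel_measurable_def by simp
    show "AE x in lborel. x \<in> ?I \<longrightarrow> norm (\<phi> x * f x) \<le> norm ((\<phi> x)\<^sup>2 * f x + f x)"
    proof (intro AE_I2 impI)
      fix x assume x: "x \<in> ?I"
      have f0: "f x \<ge> 0" using assms(9) x by blast
      have "norm (\<phi> x * f x) = \<bar>\<phi> x\<bar> * f x" using f0 by (simp add: abs_mult)
      also have "\<dots> \<le> ((\<phi> x)\<^sup>2 + 1) * f x" using abs_le_sq1 f0 by (rule mult_right_mono)
      also have "\<dots> \<le> norm ((\<phi> x)\<^sup>2 * f x + f x)" by (simp add: algebra_simps)
      finally show "norm (\<phi> x * f x) \<le> norm ((\<phi> x)\<^sup>2 * f x + f x)" .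
    qed
  qed
  define c where "c = \<phi> z"
  have G1eq: "(\<lambda>x. (\<phi> x - \<phi> z)\<^sup>2 * f x) = (\<lambda>x. ((\<phi> x)\<^sup>2 * f x - (2 * c) * (\<phi> x * f x)) + c\<^sup>2 * f x)"
    by (auto simp: fun_eq_iff c_def power2_eq_square algebra_simps)
  have G1I: "set_integrable lborel ?I (\<lambda>x. (\<phi> x - \<phi> z)\<^sup>2 * f x)"
    unfolding G1eq using phi2I phifI fI by (intro set_integral_add set_integral_diff set_integrable_mult_right)
  have G1val: "(LINT x:?I|lborel. (\<phi> x - \<phi> z)\<^sup>2 * f x)
      = (LINT x:?I|lborel. (\<phi> x)\<^sup>2 * f x) - 2 * c * (LINT x:?I|lborel. \<phi> x * f x) + c\<^sup>2"
    unfolding G1eq using phi2I phifI fI assms(11)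
    by (simp add: set_integral_add set_integral_diff set_integrable_mult_right)
  have var: "(LINT x:?I|lborel. (\<phi> x)\<^sup>2 * f x) - (LINT x:?I|lborel. \<phi> x * f x)\<^sup>2
      \<le> (LINT x:?I|lborel. (\<phi> x - \<phi> z)\<^sup>2 * f x)"
  proof -
    have "0 \<le> ((LINT x:?I|lborel. \<phi> x * f x) - c)\<^sup>2" by simp
    then show ?thesis unfolding G1val by (simp add: power2_eq_square algebra_simps)
  qed
  let ?G1 = "\<lambda>x. (\<phi> x - \<phi> z)\<^sup>2 * f x"
  let ?G2 = "\<lambda>x. P x / deriv Q x * (deriv \<phi> x)\<^sup>2 * f x"
  have G1nn: "0 \<le> ?G1 x" if "x \<in> ?I" for x using assms(9) that by simp
  have G2nn: "0 \<le> ?G2 x" if "x \<in> ?I" for x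
    using assms(4,6,9) that by (intro mult_nonneg_nonneg divide_nonneg_pos) auto
  show ?thesis
  proof (rule einterval_Icc_approximation[OF assms(1)])
  fix u l :: "nat \<Rightarrow> real"
  assume ul: "einterval im ip = (\<Union>i. {l i .. u i})"
    "incseq u" "decseq l" "\<And>i. l i < u i" "\<And>i. im < l i" "\<And>i. u i < ip"
    "l \<longlonglongrightarrow> im" "u \<longlonglongrightarrow> ip"
  define lo where "lo i = min (l i) z" for i
  define hi where "hi i = max (u i) z" for i
  have lI: "l i \<in> ?I" for i using ul(4-6)[of i] unfolding ointerval_def
    using less_trans[of "ereal (l i)" "ereal (u i)" ip] by auto
  have uI: "u i \<in> ?I" for i using ul(4-6)[of i] unfolding ointerval_def
    using less_trans[of im "ereal (l i)" "ereal (u i)"] by auto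
  have loI: "lo i \<in> ?I" for i using lI zI by (simp add: lo_def min_def)
  have hiI: "hi i \<in> ?I" for i using uI zI by (simp add: hi_def max_def)
  have AsubI: "{lo i .. hi i} \<subseteq> ?I" for i using conv[OF loI hiI] by auto
  have step: "(\<integral>\<^sup>+x\<in>{lo i .. hi i}. ennreal (?G1 x) \<partial>lborel)
      \<le> (\<integral>\<^sup>+x\<in>?I. ennreal (?G2 x) \<partial>lborel)" for i
  proof -
    have sub: "x \<in> ?I" if "x \<in> {lo i .. hi i}" for x using AsubI that by blast
    have lz: "lo i \<le> z" and zh: "z \<le> hi i" by (simp_all add: lo_def hi_def)
    have fint: "set_integrable lborel {lo i .. hi i} f"
      by (rule set_integrable_subset[OF fI _ AsubI]) simp
    have G1int: "set_integrable lborel {lo i .. hi i} ?G1"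
      by (rule set_integrable_subset[OF G1I _ AsubI]) simp
    have Qpos': "\<And>x. x \<in> {lo i .. hi i} \<Longrightarrow> deriv Q x > 0" using sub assms(6) by blast
    have Pnn': "\<And>x. x \<in> {lo i .. hi i} \<Longrightarrow> P x \<ge> 0" using sub assms(4) by blast
    have fnn': "\<And>x. x \<in> {lo i .. hi i} \<Longrightarrow> f x \<ge> 0" using sub assms(9) by blast
    have dA': "\<And>x. x \<in> {lo i .. hi i} \<Longrightarrow> ((\<lambda>y. P y * f y) has_real_derivative - (Q x * f x)) (at x)"
      using sub assms(12) by blast
    have Qlo: "Q (lo i) \<le> 0" using Qmono[OF loI zI lz] Qz by simp
    have Qhi: "Q (hi i) \<ge> 0" using Qmono[OF zI hiI zh] Qz by simp
    note cs = compact_step[of "lo i" z "hi i" \<phi> Q P f, OF lz zh dphi[OF sub] cdphi[OF sub]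
        dQ[OF sub] cdQ[OF sub] cP[OF sub] Qpos' Qz Qneq[OF sub] Qlo Qhi Pnn' fnn' dA' fint G1int]
    note cs1 = cs(1) and cs2 = cs(2)
    have "(\<integral>\<^sup>+x\<in>{lo i .. hi i}. ennreal (?G1 x) \<partial>lborel) = ennreal (LINT x:{lo i .. hi i}|lborel. ?G1 x)"
      by (rule set_nn_eq[OF G1int]) (use G1nn sub in auto)
    also have "\<dots> \<le> ennreal (LINT x:{lo i .. hi i}|lborel. ?G2 x)"
      using cs2 by (rule ennreal_leI)
    also have "\<dots> = (\<integral>\<^sup>+x\<in>{lo i .. hi i}. ennreal (?G2 x) \<partial>lborel)"
      by (rule set_nn_eq[OF cs1, symmetric]) (use G2nn sub in auto)
    also have "\<dots> \<le> (\<integral>\<^sup>+x\<in>?I. ennreal (?G2 x) \<partial>lborel)"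
      by (rule nn_set_integral_set_mono[OF AsubI])
    finally show ?thesis .
  qed
  have gmeas: "(\<lambda>x. ennreal (?G1 x) * indicator ?I x) \<in> borel_measurable lborel"
  proof -
    have "(\<lambda>x. indicator ?I x *\<^sub>R ?G1 x) \<in> borel_measurable borel"
      using G1I unfolding set_integrable_def by (simp add: borel_measurable_integrable)
    then have "(\<lambda>x. ennreal (indicator ?I x *\<^sub>R ?G1 x)) \<in> borel_measurable borel" by measurable
    moreover have "(\<lambda>x. ennreal (indicator ?I x *\<^sub>R ?G1 x)) = (\<lambda>x. ennreal (?G1 x) * indicator ?I x)"
      by (auto simp: indicator_def fun_eq_iff)
    ultimately show ?thesis by simp
  qed
  define M where "M = density lborel (\<lambda>x. ennreal (?G1 x) * indicator ?I x)"
  have emA: "emeasure M {lo i..hi i} = (\<integral>\<^sup>+x\<in>{lo i..hi i}. ennreal (?G1 x) \<partial>lborel)" for i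
  proof -
    have "emeasure M {lo i..hi i} = (\<integral>\<^sup>+x. ennreal (?G1 x) * indicator ?I x * indicator {lo i..hi i} x \<partial>lborel)"
      unfolding M_def by (rule emeasure_density[OF gmeas]) simp
    also have "\<dots> = (\<integral>\<^sup>+x\<in>{lo i..hi i}. ennreal (?G1 x) \<partial>lborel)"
      using AsubI[of i] by (intro nn_integral_cong) (auto simp: indicator_def)
    finally show ?thesis .
  qed
  have emI: "emeasure M ?I = (\<integral>\<^sup>+x\<in>?I. ennreal (?G1 x) \<partial>lborel)"
  proof -
    have "emeasure M ?I = (\<integral>\<^sup>+x. ennreal (?G1 x) * indicator ?I x * indicator ?I x \<partial>lborel)"
      unfolding M_def by (rule emeasure_density[OF gmeas measI])
    also have "\<dots> = (\<integral>\<^sup>+x\<in>?I. ennreal (?G1 x) \<partial>lborel)"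
      by (intro nn_integral_cong) (auto simp: indicator_def)
    finally show ?thesis .
  qed
  have inc: "incseq (\<lambda>i. {lo i..hi i})"
  proof (rule incseq_SucI)
    fix n
    have "l (Suc n) \<le> l n" using ul(3) by (simp add: decseq_Suc_iff)
    moreover have "u n \<le> u (Suc n)" using ul(2) by (simp add: incseq_Suc_iff)
    ultimately show "{lo n..hi n} \<subseteq> {lo (Suc n)..hi (Suc n)}"
      by (auto simp: lo_def hi_def)
  qed
  have Un: "(\<Union>i. {lo i..hi i}) = ?I"
  proof
    show "(\<Union>i. {lo i..hi i}) \<subseteq> ?I" using AsubI by blast
    show "?I \<subseteq> (\<Union>i. {lo i..hi i})"
    proof
      fix x assume "x \<in> ?I"
      then have "x \<in> (\<Union>i. {l i .. u i})" using Ieq ul(1) by simp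
      then obtain i where "l i \<le> x" "x \<le> u i" by auto
      then have "x \<in> {lo i..hi i}" by (auto simp: lo_def hi_def)
      then show "x \<in> (\<Union>i. {lo i..hi i})" by blast
    qed
  qed
  have "(\<integral>\<^sup>+x\<in>?I. ennreal (?G1 x) \<partial>lborel) = (SUP i. emeasure M {lo i..hi i})"
  proof -
    have rng: "range (\<lambda>i. {lo i..hi i}) \<subseteq> sets M" by (auto simp: M_def)
    have "(SUP i. emeasure M {lo i..hi i}) = emeasure M ?I"
      using SUP_emeasure_incseq[OF rng inc] Un by simp
    then show ?thesis using emI by simp
  qed
  also have "\<dots> \<le> (\<integral>\<^sup>+x\<in>?I. ennreal (?G2 x) \<partial>lborel)"
    by (rule SUP_least, unfold emA, rule step)
  finally have main: "(\<integral>\<^sup>+x\<in>?I. ennreal (?G1 x) \<partial>lborel) \<le> (\<integral>\<^sup>+x\<in>?I. ennreal (?G2 x) \<partial>lborel)" .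
  have "ennreal ((LINT x:?I|lborel. (\<phi> x)\<^sup>2 * f x) - (LINT x:?I|lborel. \<phi> x * f x)\<^sup>2)
      \<le> ennreal (LINT x:?I|lborel. ?G1 x)"
    using var by (rule ennreal_leI)
  also have "\<dots> = (\<integral>\<^sup>+x\<in>?I. ennreal (?G1 x) \<partial>lborel)"
    by (rule set_nn_eq[OF G1I measI, symmetric]) (use G1nn in auto)
  also note main
  finally show ?thesis .
  qed
qed

end
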